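(* Let $\mathbb{E}$ be a finitely complete category, $\Sigma$ a fibrational class of split epimorphisms, and suppose $\mathbb{E}$ is a $\Sigma$-Mal'tsev category. Let $(f,s)\colon X\rightleftarrows Y$ be a split epimorphism in $\Sigma$. Then there is at most one internal monoid structure on the object $(f,s)$ of the fibre $\mathrm{Pt}_Y(\mathbb{E})$, and when such a structure exists it is commutative.
   Context: A split epimorphism is a pair $(f,s)$ with $fs=1$. $\mathrm{Pt}_Y(\mathbb{E})$ is the category of split epimorphisms with codomain $Y$ and morphisms commuting with both the epimorphisms and the splittings; it is finitely complete, with terminal object $(1_Y,1_Y)$ and binary product of $(f,s)$ with itself given by $X\times_YX$ over $Y$. A class $\Sigma$ of split epimorphisms is fibrational if it contains all split epimorphisms $(f,s)$ with $f$ invertible and is stable under pullback along any morphism. A pair of morphisms with common codomain $Z$ is jointly extremally epic if it factors jointly through no non-invertible monomorphism into $Z$. $\mathbb{E}$ is $\Sigma$-Mal'tsev if for every split epimorphism $(f,s)\colon X\rightleftarrows Y$ in $\Sigma$ and every split epimorphism $(g,t)$ with $g\colon Y'\to Y$, letting $X'=Y'\times_YX$, $s'=(1_{Y'},sg)$, $\bar t=(tf,1_X)$, the pair $(s',\bar t)$ is jointly extremally epic. *)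

theory Defs
  imports Main
begin

text \<open>Categories with hom-sets: objects of type 'o, arrows of type 'm.
  comp g f is the composite "g after f".\<close>

record ('o, 'm) category =
  obj   :: "'o set"
  hom   :: "'o \<Rightarrow> 'o \<Rightarrow> 'm set"
  comp  :: "'m \<Rightarrow> 'm \<Rightarrow> 'm"
  ident :: "'o \<Rightarrow> 'm"

definition is_category :: "('o, 'm) category \<Rightarrow> bool" where
  "is_category C \<longleftrightarrow>
     (\<forall>A B f. f \<in> hom C A B \<longrightarrow> A \<in> obj C \<and> B \<in> obj C) \<and>
     (\<forall>A B A' B' f. f \<in> hom C A B \<longrightarrow> f \<in> hom C A' B' \<longrightarrow> A = A' \<and> B = B') \<and>
     (\<forall>A\<in>obj C. ident C A \<in> hom C A A) \<and>
     (\<forall>A B D f g. f \<in> hom C A B \<longrightarrow> g \<in> hom C B D \<longrightarrow> comp C g f \<in> hom C A D) \<and>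
     (\<forall>A B f. f \<in> hom C A B \<longrightarrow> comp C f (ident C A) = f \<and> comp C (ident C B) f = f) \<and>
     (\<forall>A B D E f g h. f \<in> hom C A B \<longrightarrow> g \<in> hom C B D \<longrightarrow> h \<in> hom C D E \<longrightarrow>
        comp C h (comp C g f) = comp C (comp C h g) f)"

definition is_iso :: "('o, 'm) category \<Rightarrow> 'o \<Rightarrow> 'o \<Rightarrow> 'm \<Rightarrow> bool" where
  "is_iso C A B f \<longleftrightarrow> f \<in> hom C A B \<and>
     (\<exists>g \<in> hom C B A. comp C g f = ident C A \<and> comp C f g = ident C B)"

definition is_mono :: "('o, 'm) category \<Rightarrow> 'o \<Rightarrow> 'o \<Rightarrow> 'm \<Rightarrow> bool" where
  "is_mono C A B i \<longleftrightarrow> i \<in> hom C A B \<and>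
     (\<forall>T a b. a \<in> hom C T A \<longrightarrow> b \<in> hom C T A \<longrightarrow> comp C i a = comp C i b \<longrightarrow> a = b)"

definition split_epi :: "('o, 'm) category \<Rightarrow> 'o \<Rightarrow> 'o \<Rightarrow> 'm \<Rightarrow> 'm \<Rightarrow> bool" where
  "split_epi C X Y f s \<longleftrightarrow> f \<in> hom C X Y \<and> s \<in> hom C Y X \<and> comp C f s = ident C Y"

definition is_terminal :: "('o, 'm) category \<Rightarrow> 'o \<Rightarrow> bool" where
  "is_terminal C T0 \<longleftrightarrow> T0 \<in> obj C \<and> (\<forall>A \<in> obj C. \<exists>!u. u \<in> hom C A T0)"

definition is_pullback :: "('o, 'm) category \<Rightarrow> 'o \<Rightarrow> 'o \<Rightarrow> 'o \<Rightarrow> 'm \<Rightarrow> 'm \<Rightarrow> 'o \<Rightarrow> 'm \<Rightarrow> 'm \<Rightarrow> bool" where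
  "is_pullback C X Y Z f g P p1 p2 \<longleftrightarrow>
     f \<in> hom C X Z \<and> g \<in> hom C Y Z \<and> p1 \<in> hom C P X \<and> p2 \<in> hom C P Y \<and>
     comp C f p1 = comp C g p2 \<and>
     (\<forall>T q1 q2. q1 \<in> hom C T X \<longrightarrow> q2 \<in> hom C T Y \<longrightarrow> comp C f q1 = comp C g q2 \<longrightarrow>
        (\<exists>!u. u \<in> hom C T P \<and> comp C p1 u = q1 \<and> comp C p2 u = q2))"

definition finitely_complete :: "('o, 'm) category \<Rightarrow> bool" where
  "finitely_complete C \<longleftrightarrow> (\<exists>T0. is_terminal C T0) \<and>
     (\<forall>X Y Z f g. f \<in> hom C X Z \<longrightarrow> g \<in> hom C Y Z \<longrightarrow> (\<exists>P p1 p2. is_pullback C X Y Z f g P p1 p2))"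

definition fibrational :: "('o, 'm) category \<Rightarrow> ('o \<times> 'o \<times> 'm \<times> 'm) set \<Rightarrow> bool" where
  "fibrational C Sig \<longleftrightarrow>
     (\<forall>X Y f s. (X, Y, f, s) \<in> Sig \<longrightarrow> split_epi C X Y f s) \<and>
     (\<forall>X Y f s. split_epi C X Y f s \<longrightarrow> is_iso C X Y f \<longrightarrow> (X, Y, f, s) \<in> Sig) \<and>
     (\<forall>X Y f s Y' h P p1 p2 s'. (X, Y, f, s) \<in> Sig \<longrightarrow> h \<in> hom C Y' Y \<longrightarrow>
        is_pullback C Y' X Y h f P p1 p2 \<longrightarrow>
        s' \<in> hom C Y' P \<longrightarrow> comp C p1 s' = ident C Y' \<longrightarrow> comp C p2 s' = comp C s h \<longrightarrow>
        (P, Y', p1, s') \<in> Sig)"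

definition jointly_extremally_epic :: "('o, 'm) category \<Rightarrow> 'o \<Rightarrow> 'o \<Rightarrow> 'o \<Rightarrow> 'm \<Rightarrow> 'm \<Rightarrow> bool" where
  "jointly_extremally_epic C A B Z a b \<longleftrightarrow> a \<in> hom C A Z \<and> b \<in> hom C B Z \<and>
     (\<forall>W i a' b'. is_mono C W Z i \<longrightarrow> a' \<in> hom C A W \<longrightarrow> b' \<in> hom C B W \<longrightarrow>
        comp C i a' = a \<longrightarrow> comp C i b' = b \<longrightarrow> is_iso C W Z i)"

text \<open>X' = Y' \<times>_Y X with projections p1 : X' \<rightarrow> Y', p2 : X' \<rightarrow> X;
  s' = (1_{Y'}, s g), tbar = (t f, 1_X).\<close>
definition sigma_maltsev :: "('o, 'm) category \<Rightarrow> ('o \<times> 'o \<times> 'm \<times> 'm) set \<Rightarrow> bool" where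
  "sigma_maltsev C Sig \<longleftrightarrow>
     (\<forall>X Y f s Y' g t X' p1 p2 s' tb. (X, Y, f, s) \<in> Sig \<longrightarrow> split_epi C Y' Y g t \<longrightarrow>
        is_pullback C Y' X Y g f X' p1 p2 \<longrightarrow>
        s' \<in> hom C Y' X' \<longrightarrow> comp C p1 s' = ident C Y' \<longrightarrow> comp C p2 s' = comp C s g \<longrightarrow>
        tb \<in> hom C X X' \<longrightarrow> comp C p1 tb = comp C t f \<longrightarrow> comp C p2 tb = ident C X \<longrightarrow>
        jointly_extremally_epic C Y' X X' s' tb)"

definition pair :: "('o, 'm) category \<Rightarrow> 'o \<Rightarrow> 'm \<Rightarrow> 'm \<Rightarrow> 'o \<Rightarrow> 'm \<Rightarrow> 'm \<Rightarrow> 'm" where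
  "pair C P p1 p2 T a b = (THE u. u \<in> hom C T P \<and> comp C p1 u = a \<and> comp C p2 u = b)"

text \<open>The product of
  (f,s) with itself in Pt_Y(E) is X \<times>_Y X = (P, p1, p2); its split epi is f p1 and its
  splitting is (s,s). The unit is a morphism from the terminal object (1_Y,1_Y) of Pt_Y(E),
  hence necessarily s. The multiplication m : P \<rightarrow> X must be a morphism of Pt_Y(E),
  i.e. f m = f p1 and m (s,s) = s; unit laws m (sf,1) = 1 = m (1,sf); associativity is
  stated on generalized elements a, b, c : T \<rightarrow> X over Y.\<close>
definition internal_monoid :: "('o, 'm) category \<Rightarrow> 'o \<Rightarrow> 'o \<Rightarrow> 'm \<Rightarrow> 'm \<Rightarrow> 'o \<Rightarrow> 'm \<Rightarrow> 'm \<Rightarrow> 'm \<Rightarrow> bool" where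
  "internal_monoid C X Y f s P p1 p2 m \<longleftrightarrow>
     m \<in> hom C P X \<and>
     comp C f m = comp C f p1 \<and>
     comp C m (pair C P p1 p2 Y s s) = s \<and>
     comp C m (pair C P p1 p2 X (comp C s f) (ident C X)) = ident C X \<and>
     comp C m (pair C P p1 p2 X (ident C X) (comp C s f)) = ident C X \<and>
     (\<forall>T a b c. a \<in> hom C T X \<longrightarrow> b \<in> hom C T X \<longrightarrow> c \<in> hom C T X \<longrightarrow>
        comp C f a = comp C f b \<longrightarrow> comp C f b = comp C f c \<longrightarrow>
        comp C m (pair C P p1 p2 T (comp C m (pair C P p1 p2 T a b)) c) =
        comp C m (pair C P p1 p2 T a (comp C m (pair C P p1 p2 T b c))))"

definition commutative_monoid :: "('o, 'm) category \<Rightarrow> 'o \<Rightarrow> 'm \<Rightarrow> 'm \<Rightarrow> 'm \<Rightarrow> bool" where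
  "commutative_monoid C P p1 p2 m \<longleftrightarrow> comp C m (pair C P p1 p2 P p2 p1) = m"

end

theory Submission
  imports Defs
begin

lemma cc: "is_category C \<Longrightarrow> f \<in> hom C A B \<Longrightarrow> g \<in> hom C B D \<Longrightarrow> comp C g f \<in> hom C A D"
  unfolding is_category_def by blast
lemma ca: "is_category C \<Longrightarrow> f \<in> hom C A B \<Longrightarrow> g \<in> hom C B D \<Longrightarrow> h \<in> hom C D E \<Longrightarrow>
   comp C (comp C h g) f = comp C h (comp C g f)"
  unfolding is_category_def by metis
lemma cidr: "is_category C \<Longrightarrow> f \<in> hom C A B \<Longrightarrow> comp C f (ident C A) = f"
  unfolding is_category_def by blast
lemma cidl: "is_category C \<Longrightarrow> f \<in> hom C A B \<Longrightarrow> comp C (ident C B) f = f"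
  unfolding is_category_def by blast
lemma cidh: "is_category C \<Longrightarrow> f \<in> hom C A B \<Longrightarrow> ident C A \<in> hom C A A \<and> ident C B \<in> hom C B B"
proof -
  assume c: "is_category C" and f: "f \<in> hom C A B"
  have "A \<in> obj C \<and> B \<in> obj C" using c f unfolding is_category_def by meson
  then show ?thesis using c unfolding is_category_def by meson
qed

lemma pair_prop:
  assumes "is_pullback C A B Z f g P p1 p2" "q1 \<in> hom C T A" "q2 \<in> hom C T B" "comp C f q1 = comp C g q2"
  shows "pair C P p1 p2 T q1 q2 \<in> hom C T P \<and> comp C p1 (pair C P p1 p2 T q1 q2) = q1
     \<and> comp C p2 (pair C P p1 p2 T q1 q2) = q2"
proof -
  have "\<exists>!u. u \<in> hom C T P \<and> comp C p1 u = q1 \<and> comp C p2 u = q2"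
    using assms unfolding is_pullback_def by blast
  then show ?thesis unfolding pair_def by (rule theI')
qed

lemma pb_uniq:
  assumes "is_pullback C A B Z f g P p1 p2" "u \<in> hom C T P" "v \<in> hom C T P"
    "comp C p1 u = comp C p1 v" "comp C p2 u = comp C p2 v" "is_category C"
  shows "u = v"
proof -
  have h: "p1 \<in> hom C P A" "p2 \<in> hom C P B" "f \<in> hom C A Z" "g \<in> hom C B Z"
      "comp C f p1 = comp C g p2" using assms(1) unfolding is_pullback_def by auto
  have "comp C f (comp C p1 v) = comp C g (comp C p2 v)"
    using h assms by (metis ca)
  moreover have "comp C p1 v \<in> hom C T A" "comp C p2 v \<in> hom C T B" using h assms cc by metis+
  ultimately have "\<exists>!w. w \<in> hom C T P \<and> comp C p1 w = comp C p1 v \<and> comp C p2 w = comp C p2 v"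
    using assms(1) unfolding is_pullback_def by blast
  then show ?thesis using assms by blast
qed

lemma key:
  assumes cat: "is_category C" and fc: "finitely_complete C"
    and pb: "is_pullback C X X Y f f P p1 p2"
    and je: "jointly_extremally_epic C X X P i1 i2"
    and m: "m \<in> hom C P X" and m': "m' \<in> hom C P X" and fm: "comp C f m = comp C f m'"
    and e1: "comp C m i1 = comp C m' i1" and e2: "comp C m i2 = comp C m' i2"
  shows "m = m'"
proof -
  have p: "p1 \<in> hom C P X" "p2 \<in> hom C P X" "f \<in> hom C X Y" "comp C f p1 = comp C f p2"
    using pb unfolding is_pullback_def by auto
  have i: "i1 \<in> hom C X P" "i2 \<in> hom C X P" using je unfolding jointly_extremally_epic_def by auto
  have idX: "ident C X \<in> hom C X X" using cidh[OF cat p(3)] by blast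
  define d where "d = pair C P p1 p2 X (ident C X) (ident C X)"
  have d: "d \<in> hom C X P" "comp C p1 d = ident C X" "comp C p2 d = ident C X"
    using pair_prop[OF pb idX idX] d_def by auto
  define mu where "mu = pair C P p1 p2 P m m'"
  have mu: "mu \<in> hom C P P" "comp C p1 mu = m" "comp C p2 mu = m'"
    using pair_prop[OF pb m m' fm] mu_def by auto
  obtain E q1 q2 where E: "is_pullback C P X P mu d E q1 q2"
    using fc mu(1) d(1) unfolding finitely_complete_def by blast
  have q: "q1 \<in> hom C E P" "q2 \<in> hom C E X" "comp C mu q1 = comp C d q2"
    using E unfolding is_pullback_def by auto
  have mq: "comp C m q1 = q2"
    using ca[OF cat q(1) mu(1) p(1)] ca[OF cat q(2) d(1) p(1)] q(3) mu(2) d(2) cidl[OF cat q(2)] by simp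
  have mq': "comp C m' q1 = q2"
    using ca[OF cat q(1) mu(1) p(2)] ca[OF cat q(2) d(1) p(2)] q(3) mu(3) d(3) cidl[OF cat q(2)] by simp
  have mono: "is_mono C E P q1"
    unfolding is_mono_def
  proof (intro conjI allI impI)
    show "q1 \<in> hom C E P" by (rule q(1))
    fix T a b assume a: "a \<in> hom C T E" and b: "b \<in> hom C T E" and eq: "comp C q1 a = comp C q1 b"
    have "comp C q2 a = comp C q2 b" using eq mq ca[OF cat a q(1) m] ca[OF cat b q(1) m] by simp
    then show "a = b" using pb_uniq[OF E a b eq _ cat] by blast
  qed
  have fac: "\<exists>u. u \<in> hom C X E \<and> comp C q1 u = i" if ii: "i \<in> hom C X P"
    and ei: "comp C m i = comp C m' i" for i
  proof -
    have mi: "comp C m i \<in> hom C X X" using cc[OF cat ii m] .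
    have "comp C mu i = comp C d (comp C m i)"
    proof (rule pb_uniq[OF pb _ _ _ _ cat])
      show "comp C mu i \<in> hom C X P" using cc[OF cat ii mu(1)] .
      show "comp C d (comp C m i) \<in> hom C X P" using cc[OF cat mi d(1)] .
      show "comp C p1 (comp C mu i) = comp C p1 (comp C d (comp C m i))"
        using ca[OF cat ii mu(1) p(1)] ca[OF cat mi d(1) p(1)] mu(2) d(2) cidl[OF cat mi] by simp
      show "comp C p2 (comp C mu i) = comp C p2 (comp C d (comp C m i))"
        using ca[OF cat ii mu(1) p(2)] ca[OF cat mi d(1) p(2)] mu(3) d(3) cidl[OF cat mi] ei by simp
    qed
    then have "\<exists>!u. u \<in> hom C X E \<and> comp C q1 u = i \<and> comp C q2 u = comp C m i"
      using E ii mi unfolding is_pullback_def by blast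
    then show ?thesis by blast
  qed
  obtain u1 where u1: "u1 \<in> hom C X E" "comp C q1 u1 = i1" using fac[OF i(1) e1] by blast
  obtain u2 where u2: "u2 \<in> hom C X E" "comp C q1 u2 = i2" using fac[OF i(2) e2] by blast
  have "is_iso C E P q1" using je mono u1 u2 unfolding jointly_extremally_epic_def by blast
  then obtain g where g: "g \<in> hom C P E" "comp C q1 g = ident C P" unfolding is_iso_def by blast
  have "m = comp C m (comp C q1 g)" using g cidr[OF cat m] by simp
  also have "\<dots> = comp C (comp C m q1) g" using ca[OF cat g(1) q(1) m] by simp
  also have "\<dots> = comp C (comp C m' q1) g" using mq mq' by simp
  also have "\<dots> = comp C m' (comp C q1 g)" using ca[OF cat g(1) q(1) m'] by simp
  also have "\<dots> = m'" using g cidr[OF cat m'] by simp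
  finally show ?thesis .
qed

theorem corollary2p5:
  fixes C :: "('o, 'm) category"
    and Sig :: "('o \<times> 'o \<times> 'm \<times> 'm) set"
  assumes "is_category C"
    and "finitely_complete C"
    and "fibrational C Sig"
    and "sigma_maltsev C Sig"
    and "(X, Y, f, s) \<in> Sig"
    and "is_pullback C X X Y f f P p1 p2"
  shows "(\<forall>m m'. internal_monoid C X Y f s P p1 p2 m \<longrightarrow> internal_monoid C X Y f s P p1 p2 m' \<longrightarrow> m = m')
       \<and> (\<forall>m. internal_monoid C X Y f s P p1 p2 m \<longrightarrow> commutative_monoid C P p1 p2 m)"
proof -
  note cat = assms(1) and pb = assms(6)
  have se: "split_epi C X Y f s" using assms(3,5) unfolding fibrational_def by blast
  have fs: "f \<in> hom C X Y" "s \<in> hom C Y X" "comp C f s = ident C Y" using se unfolding split_epi_def by auto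
  have p: "p1 \<in> hom C P X" "p2 \<in> hom C P X" "comp C f p1 = comp C f p2"
    using pb unfolding is_pullback_def by auto
  have idX: "ident C X \<in> hom C X X" using cidh[OF cat fs(1)] by blast
  have sf: "comp C s f \<in> hom C X X" using cc[OF cat fs(1) fs(2)] .
  have fsf: "comp C f (comp C s f) = f" using ca[OF cat fs(1) fs(2) fs(1)] fs(3) cidl[OF cat fs(1)] by simp
  have fid: "comp C f (ident C X) = f" using cidr[OF cat fs(1)] .
  define i1 where "i1 = pair C P p1 p2 X (ident C X) (comp C s f)"
  define i2 where "i2 = pair C P p1 p2 X (comp C s f) (ident C X)"
  have i1: "i1 \<in> hom C X P" "comp C p1 i1 = ident C X" "comp C p2 i1 = comp C s f"
    using pair_prop[OF pb idX sf] fsf fid i1_def by auto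
  have i2: "i2 \<in> hom C X P" "comp C p1 i2 = comp C s f" "comp C p2 i2 = ident C X"
    using pair_prop[OF pb sf idX] fsf fid i2_def by auto
  have st: "split_epi C X Y f s" by (rule se)
  have je: "jointly_extremally_epic C X X P i1 i2"
  proof -
    have "\<forall>X Y f s Y' g t X' p1 p2 s' tb. (X, Y, f, s) \<in> Sig \<longrightarrow> split_epi C Y' Y g t \<longrightarrow>
        is_pullback C Y' X Y g f X' p1 p2 \<longrightarrow>
        s' \<in> hom C Y' X' \<longrightarrow> comp C p1 s' = ident C Y' \<longrightarrow> comp C p2 s' = comp C s g \<longrightarrow>
        tb \<in> hom C X X' \<longrightarrow> comp C p1 tb = comp C t f \<longrightarrow> comp C p2 tb = ident C X \<longrightarrow>
        jointly_extremally_epic C Y' X X' s' tb" using assms(4) unfolding sigma_maltsev_def .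
    from this[rule_format, of X Y f s X f s P p1 p2 i1 i2] show ?thesis
      using assms(5) st pb i1 i2 by blast
  qed
  have M: "m \<in> hom C P X \<and> comp C f m = comp C f p1 \<and> comp C m i1 = ident C X \<and> comp C m i2 = ident C X"
    if "internal_monoid C X Y f s P p1 p2 m" for m
    using that unfolding internal_monoid_def i1_def i2_def by blast
  have part1: "\<forall>m m'. internal_monoid C X Y f s P p1 p2 m \<longrightarrow> internal_monoid C X Y f s P p1 p2 m' \<longrightarrow> m = m'"
  proof (intro allI impI)
    fix m m' assume a: "internal_monoid C X Y f s P p1 p2 m" "internal_monoid C X Y f s P p1 p2 m'"
    show "m = m'" using key[OF cat assms(2) pb je] M[OF a(1)] M[OF a(2)] by metis
  qed
  have part2: "\<forall>m. internal_monoid C X Y f s P p1 p2 m \<longrightarrow> commutative_monoid C P p1 p2 m"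
  proof (intro allI impI)
    fix m assume a: "internal_monoid C X Y f s P p1 p2 m"
    note Mm = M[OF a]
    define t where "t = pair C P p1 p2 P p2 p1"
    have t: "t \<in> hom C P P" "comp C p1 t = p2" "comp C p2 t = p1"
      using pair_prop[OF pb p(2) p(1)] p(3) t_def by auto
    have ti1: "comp C t i1 = i2"
      by (rule pb_uniq[OF pb cc[OF cat i1(1) t(1)] i2(1) _ _ cat];
          simp add: ca[OF cat i1(1) t(1) p(1), symmetric] ca[OF cat i1(1) t(1) p(2), symmetric] t i1 i2)
    have ti2: "comp C t i2 = i1"
      by (rule pb_uniq[OF pb cc[OF cat i2(1) t(1)] i1(1) _ _ cat];
          simp add: ca[OF cat i2(1) t(1) p(1), symmetric] ca[OF cat i2(1) t(1) p(2), symmetric] t i1 i2)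
    have Mh: "m \<in> hom C P X" using Mm by blast
    have mt: "comp C m t \<in> hom C P X" using cc[OF cat t(1) Mh] .
    have "comp C f (comp C m t) = comp C f p2"
      using ca[OF cat t(1) Mh fs(1), symmetric] ca[OF cat t(1) p(1) fs(1), symmetric] Mm t by simp
    then have fmt: "comp C f (comp C m t) = comp C f m" using Mm p by simp
    have "comp C m t = m"
    proof (rule key[OF cat assms(2) pb je mt _ fmt])
      show "m \<in> hom C P X" using Mm by blast
      show "comp C (comp C m t) i1 = comp C m i1" using ca[OF cat i1(1) t(1) Mh] ti1 Mm by simp
      show "comp C (comp C m t) i2 = comp C m i2" using ca[OF cat i2(1) t(1) Mh] ti2 Mm by simp
    qed
    then show "commutative_monoid C P p1 p2 m" unfolding commutative_monoid_def t_def by simp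
  qed
  show ?thesis using part1 part2 by blast
qed

end
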